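(* Let $\xi<-6$. There exists $\phi_0\in(0,\pi/4]$ such that for every $\phi\in(0,\phi_0]$ there is $c=c(\xi,\phi)>0$ such that for $z=u+\mathrm{i}v$, $$\operatorname{Re}[2\mathrm{i}\theta(z)]\ge c|v|\ \text{ for } z\in\Omega_{01}\cup\Omega_{02},\qquad \operatorname{Re}[2\mathrm{i}\theta(z)]\le -c|v|\ \text{ for } z\in\Omega_{03}\cup\Omega_{04}.$$
   Context: $\theta(z)=\frac12(z+z^{-1})\big[\xi-2+(z-z^{-1})^2\big]$. For $\xi<-6$ let $\zeta_1=\sqrt{(-\xi-\sqrt{\xi^2-36})/6}\in(0,1)$. With $z=u+\mathrm{i}v$: $\Omega_{01}=\{0<u<\zeta_1/2,\ 0<v<u\tan\phi\}$, $\Omega_{02}=\{-\zeta_1/2<u<0,\ 0<v<|u|\tan\phi\}$, $\Omega_{03}=\{-\zeta_1/2<u<0,\ -|u|\tan\phi<v<0\}$, $\Omega_{04}=\{0<u<\zeta_1/2,\ -u\tan\phi<v<0\}$. *)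

theory Defs
  imports "HOL-Analysis.Analysis"
begin

definition theta :: "real \<Rightarrow> complex \<Rightarrow> complex" where
  "theta \<xi> z = (1/2) * (z + inverse z) * (complex_of_real \<xi> - 2 + (z - inverse z)^2)"

definition zeta1 :: "real \<Rightarrow> real" where
  "zeta1 \<xi> = sqrt ((- \<xi> - sqrt (\<xi>^2 - 36)) / 6)"

definition Omega01 :: "real \<Rightarrow> real \<Rightarrow> complex set" where
  "Omega01 \<xi> \<phi> = {z. 0 < Re z \<and> Re z < zeta1 \<xi> / 2 \<and> 0 < Im z \<and> Im z < Re z * tan \<phi>}"

definition Omega02 :: "real \<Rightarrow> real \<Rightarrow> complex set" where
  "Omega02 \<xi> \<phi> = {z. - zeta1 \<xi> / 2 < Re z \<and> Re z < 0 \<and> 0 < Im z \<and> Im z < \<bar>Re z\<bar> * tan \<phi>}"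

definition Omega03 :: "real \<Rightarrow> real \<Rightarrow> complex set" where
  "Omega03 \<xi> \<phi> = {z. - zeta1 \<xi> / 2 < Re z \<and> Re z < 0 \<and> - \<bar>Re z\<bar> * tan \<phi> < Im z \<and> Im z < 0}"

definition Omega04 :: "real \<Rightarrow> real \<Rightarrow> complex set" where
  "Omega04 \<xi> \<phi> = {z. 0 < Re z \<and> Re z < zeta1 \<xi> / 2 \<and> - Re z * tan \<phi> < Im z \<and> Im z < 0}"

end

theory Submission
  imports Defs
begin

lemma th: "theta \<xi> z = (1/2) * ((z + inverse z)^3 + (\<xi> - 6) * (z + inverse z))" if "z \<noteq> 0" for z :: complex
proof -
  have e: "(z - inverse z)^2 = (z + inverse z)^2 - 4" using that by (simp add: power2_eq_square algebra_simps)
  have g: "(1/2)*w*(c - 2 + (w^2 - 4)) = (1/2)*(w^3 + (c - 6)*w)" for w c :: complex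
    by (simp add: power3_eq_cube power2_eq_square algebra_simps)
  show ?thesis unfolding theta_def e g by simp
qed

lemma reid: "Re (2 * \<i> * ((1/2) * ((Complex a b)^3 + (complex_of_real \<xi> - 6) * Complex a b))) = - b * (3*a^2 - b^2 + \<xi> - 6)"
  by (simp add: power3_eq_cube power2_eq_square algebra_simps)

lemma ident:
  fixes u v \<xi> :: real
  assumes "u^2+v^2 \<noteq> 0"
  shows "Re (2 * \<i> * theta \<xi> (Complex u v)) = v * (1/(u^2+v^2) - 1) *
     (3*(u * (1+1/(u^2+v^2)))^2 - (v * (1-1/(u^2+v^2)))^2 + \<xi> - 6)"
proof -
  define \<rho> where "\<rho> = u^2+v^2"
  have inv: "inverse (Complex u v) = Complex (u/\<rho>) (-v/\<rho>)"
    by (simp add: \<rho>_def complex_eq_iff power2_eq_square)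
  have w: "Complex u v + inverse (Complex u v) = Complex (u*(1+1/\<rho>)) (v * (1-1/\<rho>))"
    by (simp add: inv complex_eq_iff algebra_simps)
  have z0: "Complex u v \<noteq> 0" using assms by (auto simp: complex_eq_iff)
  have "Re (2 * \<i> * theta \<xi> (Complex u v)) = - (v * (1-1/\<rho>)) * (3*(u*(1+1/\<rho>))^2 - (v * (1-1/\<rho>))^2 + \<xi> - 6)"
    unfolding th[OF z0] w by (rule reid)
  also have "\<dots> = v * (1/\<rho> - 1) * (3*(u*(1+1/\<rho>))^2 - (v * (1-1/\<rho>))^2 + \<xi> - 6)"
    by (simp add: algebra_simps)
  finally show ?thesis unfolding \<rho>_def .
qed

lemma key:
  fixes u v s \<xi> :: real
  assumes "u \<noteq> 0" "v^2 \<le> u^2/16" "0<s" "s\<le>1" "u^2 < s/4" "\<xi> = -3* s - 3/s"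
  shows "1 \<le> 3*(u * (1+1/(u^2+v^2)))^2 - (v * (1-1/(u^2+v^2)))^2 + \<xi> - 6"
    and "1 \<le> 1/(u^2+v^2) - 1"
proof -
  define \<rho> where "\<rho> = u^2+v^2"
  define P where "P = 1/\<rho>"
  have u2: "u^2 > 0" using assms by simp
  have rp: "\<rho> > 0" unfolding \<rho>_def using u2 by (simp add: add_pos_nonneg)
  have rle: "\<rho> \<le> 17*u^2/16" unfolding \<rho>_def using assms by simp
  have rs: "\<rho> < 17* s/64" using rle assms by simp
  have Pg: "P > 64/(17* s)" unfolding P_def using rs rp assms(3)
    by (simp add: field_simps)
  have Pp: "P > 0" unfolding P_def using rp by simp
  have rP: "\<rho> * P = 1" unfolding P_def using rp by simp
  have sq: "(1-P)^2 \<le> (1+P)^2" using Pp by (simp add: power2_eq_square algebra_simps)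
  have "(v * (1-P))^2 \<le> (u^2/16)*(1+P)^2"
    using mult_mono[OF assms(2) sq] by (simp add: power_mult_distrib)
  hence A: "3*(u * (1+P))^2 - (v * (1-P))^2 \<ge> (47/16)*u^2*(1+P)^2"
    by (simp add: power_mult_distrib)
  have "u^2 \<ge> 16*\<rho>/17" using rle by simp
  hence "(47/16)*u^2*(1+P)^2 \<ge> (47/16)*(16*\<rho>/17)*(1+P)^2"
    by (intro mult_right_mono mult_left_mono) auto
  also have "(47/16)*(16*\<rho>/17)*(1+P)^2 = (47/17)*(\<rho> + 2 + P)"
    unfolding P_def using rp by (simp add: power2_eq_square field_simps)
  also have "\<dots> \<ge> (47/17)*(2 + 64/(17* s))" using Pg rp by simp
  finally have B: "3*(u * (1+P))^2 - (v * (1-P))^2 \<ge> (47/17)*(2 + 64/(17* s))" using A by linarith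
  have "1/s \<ge> 1" using assms by simp
  have s2: "s * s \<le> s" using assms(3,4) by (simp add: mult_left_le)
  have s3: "s * (s * s) \<le> s" using assms(3,4) s2 by (meson mult_left_le order_trans mult_nonneg_nonneg less_imp_le)
  have "(47/17)*(2 + 64/(17* s)) -3* s - 3/s - 6 \<ge> 1" using assms(3,4)
    apply (simp add: field_simps) using s2 s3 by linarith
  thus "1 \<le> 3*(u * (1+1/(u^2+v^2)))^2 - (v * (1-1/(u^2+v^2)))^2 + \<xi> - 6"
    using B assms(6) unfolding P_def \<rho>_def by linarith
  have "64/(17 * s) \<ge> 64/17" using assms(3,4) by (simp add: field_simps)
  hence "P \<ge> 2" using Pg by linarith
  thus "1 \<le> 1/(u^2+v^2) - 1" unfolding P_def \<rho>_def by simp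
qed

lemma bound:
  fixes u v s \<xi> :: real
  assumes "u \<noteq> 0" "v^2 \<le> u^2/16" "0<s" "s\<le>1" "u^2 < s/4" "\<xi> = -3 * s - 3/s"
  shows "\<exists>M\<ge>1. Re (2 * \<i> * theta \<xi> (Complex u v)) = v * M"
proof -
  have nz: "u^2+v^2 \<noteq> 0" using assms(1) by (simp add: add_nonneg_eq_0_iff)
  note k = key[OF assms]
  have "1 * 1 \<le> (1/(u^2+v^2) - 1) * (3*(u * (1+1/(u^2+v^2)))^2 - (v * (1-1/(u^2+v^2)))^2 + \<xi> - 6)"
    by (rule mult_mono[OF k(2) k(1)]) (use k in auto)
  thus ?thesis using ident[OF nz, of \<xi>] by (intro exI[of _ "(1/(u^2+v^2) - 1) * (3*(u * (1+1/(u^2+v^2)))^2 - (v * (1-1/(u^2+v^2)))^2 + \<xi> - 6)"]) (simp add: mult.assoc)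
qed

lemma sfacts:
  fixes \<xi> :: real
  assumes "\<xi> < -6"
  defines "s \<equiv> (- \<xi> - sqrt (\<xi>^2 - 36)) / 6"
  shows "0 < s" "s \<le> 1" "\<xi> = -3 * s - 3/s" "zeta1 \<xi> ^2 = s" "zeta1 \<xi> \<ge> 0"
proof -
  define r where "r = sqrt (\<xi>^2 - 36)"
  have "6^2 \<le> (-\<xi>)^2" using assms by (intro power_mono) auto
  hence x36: "36 \<le> \<xi>^2" by simp
  have r0: "r \<ge> 0" unfolding r_def using x36 by simp
  have r2: "r^2 = \<xi>^2 - 36" unfolding r_def using x36 by simp
  have "r^2 < (-\<xi>)^2" using r2 by simp
  hence rl: "r < - \<xi>" using assms by (intro power_less_imp_less_base[of r 2]) auto
  show sp: "0 < s" unfolding s_def r_def[symmetric] using rl by simp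
  have "(- \<xi> - 6)^2 \<le> r^2" using r2 assms by (simp add: power2_eq_square algebra_simps)
  hence "- \<xi> - 6 \<le> r" using r0 by (rule power2_le_imp_le)
  thus "s \<le> 1" unfolding s_def r_def[symmetric] by simp
  have "3 * s^2 + \<xi> * s + 3 = 0" unfolding s_def r_def[symmetric]
    using r2 by (simp add: power2_eq_square field_simps)
  thus "\<xi> = -3 * s - 3/s" using sp by (simp add: field_simps power2_eq_square)
  show "zeta1 \<xi> ^2 = s" unfolding zeta1_def s_def using sp s_def by simp
  show "zeta1 \<xi> \<ge> 0" unfolding zeta1_def s_def[symmetric] using sp by simp
qed

theorem mainTheorem4:
  fixes \<xi> :: real
  assumes "\<xi> < -6"
  shows "\<exists>\<phi>0. 0 < \<phi>0 \<and> \<phi>0 \<le> pi/4 \<and>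
    (\<forall>\<phi>. 0 < \<phi> \<and> \<phi> \<le> \<phi>0 \<longrightarrow>
      (\<exists>c>0. (\<forall>z \<in> Omega01 \<xi> \<phi> \<union> Omega02 \<xi> \<phi>.
                   Re (2 * \<i> * theta \<xi> z) \<ge> c * \<bar>Im z\<bar>) \<and>
               (\<forall>z \<in> Omega03 \<xi> \<phi> \<union> Omega04 \<xi> \<phi>.
                   Re (2 * \<i> * theta \<xi> z) \<le> - c * \<bar>Im z\<bar>)))"
proof -
  define s where "s = (- \<xi> - sqrt (\<xi>^2 - 36)) / 6"
  note sf = sfacts[OF assms, folded s_def]
  define \<phi>0 where "\<phi>0 = arctan (1/4)"
  have p0: "0 < \<phi>0" unfolding \<phi>0_def by simp
  have p1: "\<phi>0 \<le> pi/4" unfolding \<phi>0_def arctan_one[symmetric] arctan_le_iff by simp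
  have gen: "\<exists>M\<ge>1. Re (2 * \<i> * theta \<xi> z) = Im z * M"
    if "0 < \<phi>" "\<phi> \<le> \<phi>0" "Re z \<noteq> 0" "\<bar>Re z\<bar> < zeta1 \<xi> / 2" "\<bar>Im z\<bar> < \<bar>Re z\<bar> * tan \<phi>" for z \<phi>
  proof -
    have "tan \<phi> \<le> tan \<phi>0" using that p1 by (intro tan_mono_le) (auto simp: pi_gt_zero)
    hence t: "tan \<phi> \<le> 1/4" unfolding \<phi>0_def tan_arctan .
    have "\<bar>Re z\<bar> * tan \<phi> \<le> \<bar>Re z\<bar> * (1/4)" by (rule mult_left_mono[OF t abs_ge_zero])
    hence "\<bar>Im z\<bar> \<le> \<bar>Re z\<bar>/4" using that(5) by linarith
    hence "\<bar>Im z\<bar>^2 \<le> (\<bar>Re z\<bar>/4)^2" by (intro power_mono) auto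
    hence v: "(Im z)^2 \<le> (Re z)^2/16" by (simp add: power_divide)
    have "\<bar>Re z\<bar>^2 < (zeta1 \<xi> / 2)^2" using that(4) by (intro power_strict_mono) auto
    hence u: "(Re z)^2 < s/4" using sf(4) by (simp add: power_divide)
    from bound[OF that(3) v sf(1) sf(2) u sf(3)] show ?thesis by simp
  qed
  show ?thesis
  proof (rule exI[of _ \<phi>0], intro conjI p0 p1 allI impI)
    fix \<phi> assume ph: "0 < \<phi> \<and> \<phi> \<le> \<phi>0"
    show "\<exists>c>0. (\<forall>z \<in> Omega01 \<xi> \<phi> \<union> Omega02 \<xi> \<phi>.
                   Re (2 * \<i> * theta \<xi> z) \<ge> c * \<bar>Im z\<bar>) \<and>
               (\<forall>z \<in> Omega03 \<xi> \<phi> \<union> Omega04 \<xi> \<phi>.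
                   Re (2 * \<i> * theta \<xi> z) \<le> - c * \<bar>Im z\<bar>)"
    proof (rule exI[of _ 1], intro conjI ballI)
      show "(0::real) < 1" by simp
    next
      fix z assume z: "z \<in> Omega01 \<xi> \<phi> \<union> Omega02 \<xi> \<phi>"
      hence a: "Re z \<noteq> 0" "\<bar>Re z\<bar> < zeta1 \<xi> / 2" "\<bar>Im z\<bar> < \<bar>Re z\<bar> * tan \<phi>" "Im z > 0"
        unfolding Omega01_def Omega02_def by auto
      obtain M where "M \<ge> 1" "Re (2 * \<i> * theta \<xi> z) = Im z * M"
        using gen[OF _ _ a(1-3)] ph by auto
      thus "Re (2 * \<i> * theta \<xi> z) \<ge> 1 * \<bar>Im z\<bar>" using a(4)
        by (simp add: mult_le_cancel_left1)
    next
      fix z assume z: "z \<in> Omega03 \<xi> \<phi> \<union> Omega04 \<xi> \<phi>"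
      hence a: "Re z \<noteq> 0" "\<bar>Re z\<bar> < zeta1 \<xi> / 2" "\<bar>Im z\<bar> < \<bar>Re z\<bar> * tan \<phi>" "Im z < 0"
        unfolding Omega03_def Omega04_def by auto
      obtain M where "M \<ge> 1" "Re (2 * \<i> * theta \<xi> z) = Im z * M"
        using gen[OF _ _ a(1-3)] ph by auto
      thus "Re (2 * \<i> * theta \<xi> z) \<le> - 1 * \<bar>Im z\<bar>" using a(4)
        by (simp add: mult_le_cancel_left1)
    qed
  qed
qed

end
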